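(* Let $\mathrm{GNN}$ be a node-most-expressive GNN and $\mathrm{AGG}$ an injective function on finite multisets of node representations, and fix a labeling trick. For any node sets $S,S'$ of graphs ${\mathcal A},{\mathcal A}'$ and any integer $h\ge 0$, let ${\mathcal A}^{(S)}_{(S,h)}$ denote the labeled graph obtained by applying the labeling trick to $(S,{\mathcal A}_{(S,h)})$, and set $\mathrm{GNN}(S,{\mathcal A}^{(S)}_{(S,h)}):=\mathrm{AGG}(\{\mathrm{GNN}(i,{\mathcal A}^{(S)}_{(S,h)})\mid i\in S\})$. Then $$\mathrm{GNN}(S,{\mathcal A}^{(S)}_{(S,h)})=\mathrm{GNN}(S',{\mathcal A}'^{(S')}_{(S',h)})\iff (S,{\mathcal A}_{(S,h)})\simeq(S',{\mathcal A}'_{(S',h)}).$$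
   Context: Graphs are encoded by tensors ${\mathcal A}\in\mathbb R^{m\times m\times k}$ (diagonal: node features; off-diagonal: edge features; first slice: adjacency matrix). The $h$-hop enclosing subgraph ${\mathcal A}_{(S,h)}$ is the subgraph (with features) induced by the nodes $\bigcup_{j\in S}\{i: d(i,j)\le h\}$, $d$ the shortest-path distance, with nodes reindexed $1,\dots,m$. A permutation $\pi$ acts by $\pi(S)=\{\pi(i):i\in S\}$ and $\pi({\mathcal A})_{\pi(i),\pi(j),:}={\mathcal A}_{i,j,:}$; $(S,{\mathcal A})\simeq(S',{\mathcal A}')$ iff the two graphs have the same number of nodes and some $\pi$ has $S=\pi(S')$, ${\mathcal A}=\pi({\mathcal A}')$. A GNN is node-most-expressive if $\mathrm{GNN}(i,{\mathcal A})=\mathrm{GNN}(j,{\mathcal A}')\iff(\{i\},{\mathcal A})\simeq(\{j\},{\mathcal A}')$ for all graphs (of any size and feature dimension). A labeling trick assigns to each $(S,{\mathcal A})$ (graph with $m$ nodes) a labeling tensor ${\mathcal L}^{(S)}\in\mathbb R^{m\times m\times d}$ that is stacked onto ${\mathcal A}$ in the third dimension to form ${\mathcal A}^{(S)}$, satisfying for all $S,{\mathcal A},S',{\mathcal A}',\pi$: (1) ${\mathcal L}^{(S)}=\pi({\mathcal L}^{(S')})\Rightarrow S=\pi(S')$; (2) $S=\pi(S')$ and ${\mathcal A}=\pi({\mathcal A}')\Rightarrow{\mathcal L}^{(S)}=\pi({\mathcal L}^{(S')})$. *)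

theory Defs
  imports "HOL-Library.Multiset" "HOL-Library.Extended_Nat" "HOL-Combinatorics.Permutations"
begin

text \<open>A tensor in R^(m x m x k) is encoded as (m, k, f), where f i j c is the
entry at (i,j,c) (indices 0-based); it is required to vanish outside the index range.\<close>

type_synonym tensor = "nat \<times> nat \<times> (nat \<Rightarrow> nat \<Rightarrow> nat \<Rightarrow> real)"

definition nodes :: "tensor \<Rightarrow> nat" where "nodes A = fst A"
definition fdim :: "tensor \<Rightarrow> nat" where "fdim A = fst (snd A)"
definition ent :: "tensor \<Rightarrow> nat \<Rightarrow> nat \<Rightarrow> nat \<Rightarrow> real" where "ent A = snd (snd A)"

definition wf_tensor :: "tensor \<Rightarrow> bool" where
  "wf_tensor A \<longleftrightarrow> (\<forall>i j c. (nodes A \<le> i \<or> nodes A \<le> j \<or> fdim A \<le> c) \<longrightarrow> ent A i j c = 0)"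

text \<open>A graph: a well-formed tensor with at least one feature slice (the first slice is
the adjacency matrix).\<close>
definition graph :: "tensor \<Rightarrow> bool" where
  "graph A \<longleftrightarrow> wf_tensor A \<and> 1 \<le> fdim A"

fun walk :: "tensor \<Rightarrow> nat \<Rightarrow> nat \<Rightarrow> nat \<Rightarrow> bool" where
  "walk A 0 i j = (i = j)"
| "walk A (Suc n) i j = (\<exists>v. ent A i v 0 \<noteq> 0 \<and> walk A n v j)"

definition dist :: "tensor \<Rightarrow> nat \<Rightarrow> nat \<Rightarrow> enat" where
  "dist A i j = (if \<exists>n. walk A n i j then enat (LEAST n. walk A n i j) else \<infinity>)"

text \<open>Action of a permutation pi of the nodes: pi(A)_{pi i, pi j, :} = A_{i,j,:}.\<close>
definition perm_act :: "(nat \<Rightarrow> nat) \<Rightarrow> tensor \<Rightarrow> tensor" where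
  "perm_act \<pi> A = (nodes A, fdim A, \<lambda>a b c. ent A (inv \<pi> a) (inv \<pi> b) c)"

definition iso :: "nat set \<times> tensor \<Rightarrow> nat set \<times> tensor \<Rightarrow> bool" where
  "iso P P' \<longleftrightarrow> (case P of (S, A) \<Rightarrow> case P' of (S', A') \<Rightarrow>
     nodes A = nodes A' \<and>
     (\<exists>\<pi>. \<pi> permutes {..<nodes A'} \<and> S = \<pi> ` S' \<and> A = perm_act \<pi> A'))"

definition stack :: "tensor \<Rightarrow> tensor \<Rightarrow> tensor" where
  "stack A L = (nodes A, fdim A + fdim L,
     \<lambda>i j c. if c < fdim A then ent A i j c else ent L i j (c - fdim A))"

text \<open>h-hop enclosing subgraph of S in A, nodes reindexed 0..m'-1 in increasing order;
returns the reindexed node set S together with the induced subgraph (with features).\<close>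
definition enclosing_subgraph :: "nat \<Rightarrow> nat set \<Rightarrow> tensor \<Rightarrow> nat set \<times> tensor" where
  "enclosing_subgraph h S A =
     (let ns = sorted_list_of_set {i. i < nodes A \<and> (\<exists>j\<in>S. dist A i j \<le> enat h)} in
      ({a. a < length ns \<and> ns ! a \<in> S},
       (length ns, fdim A,
        \<lambda>a b c. if a < length ns \<and> b < length ns then ent A (ns ! a) (ns ! b) c else 0)))"

definition node_most_expressive :: "(nat \<Rightarrow> tensor \<Rightarrow> 'r) \<Rightarrow> bool" where
  "node_most_expressive gnn \<longleftrightarrow>
     (\<forall>A A' i j. graph A \<and> graph A' \<and> i < nodes A \<and> j < nodes A' \<longrightarrow>
        (gnn i A = gnn j A' \<longleftrightarrow> iso ({i}, A) ({j}, A')))"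

text \<open>A labeling trick: assigns to each (S, A) (S a node set of the graph A with m nodes)
a labeling tensor in R^(m x m x d) (d fixed by the labeling trick) satisfying
properties (1) and (2).\<close>
definition labeling_trick :: "(nat set \<Rightarrow> tensor \<Rightarrow> tensor) \<Rightarrow> bool" where
  "labeling_trick lab \<longleftrightarrow>
     (\<forall>S A. graph A \<and> S \<subseteq> {..<nodes A} \<longrightarrow>
        wf_tensor (lab S A) \<and> nodes (lab S A) = nodes A) \<and>
     (\<exists>d. \<forall>S A. graph A \<and> S \<subseteq> {..<nodes A} \<longrightarrow> fdim (lab S A) = d) \<and>
     (\<forall>S A S' A' \<pi>. graph A \<and> graph A' \<and> S \<subseteq> {..<nodes A} \<and> S' \<subseteq> {..<nodes A'} \<and>
        \<pi> permutes {..<nodes A'} \<longrightarrow>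
        (lab S A = perm_act \<pi> (lab S' A') \<longrightarrow> S = \<pi> ` S') \<and>
        (S = \<pi> ` S' \<and> A = perm_act \<pi> A' \<longrightarrow> lab S A = perm_act \<pi> (lab S' A')))"

definition gnn_set ::
  "(nat \<Rightarrow> tensor \<Rightarrow> 'r) \<Rightarrow> ('r multiset \<Rightarrow> 'o) \<Rightarrow> (nat set \<Rightarrow> tensor \<Rightarrow> tensor) \<Rightarrow>
   nat \<Rightarrow> nat set \<Rightarrow> tensor \<Rightarrow> 'o" where
  "gnn_set gnn agg lab h S A =
     (case enclosing_subgraph h S A of (T, B) \<Rightarrow>
        agg (image_mset (\<lambda>i. gnn i (stack B (lab T B))) (mset_set T)))"

end

theory Submission
  imports Defs
begin

lemma tensor_eq: "X = Y \<longleftrightarrow> nodes X = nodes Y \<and> fdim X = fdim Y \<and> ent X = ent Y"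
  by (cases X, cases Y) (auto simp: nodes_def fdim_def ent_def)

lemma perm_act_simps[simp]:
  "nodes (perm_act \<pi> A) = nodes A" "fdim (perm_act \<pi> A) = fdim A"
  "ent (perm_act \<pi> A) = (\<lambda>a b c. ent A (inv \<pi> a) (inv \<pi> b) c)"
  by (simp_all add: perm_act_def nodes_def fdim_def ent_def)

lemma perm_act_ent_app[simp]: "ent (perm_act \<pi> A) a b c = ent A (inv \<pi> a) (inv \<pi> b) c"
  by simp

lemma stack_simps[simp]:
  "nodes (stack B L) = nodes B" "fdim (stack B L) = fdim B + fdim L"
  "ent (stack B L) = (\<lambda>i j c. if c < fdim B then ent B i j c else ent L i j (c - fdim B))"
  by (simp_all add: stack_def nodes_def fdim_def ent_def)

lemma stack_graph:
  assumes "graph B" "wf_tensor L" "nodes L = nodes B"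
  shows "graph (stack B L)"
  using assms unfolding graph_def wf_tensor_def by auto

lemma stack_perm_split:
  assumes "wf_tensor B" "wf_tensor B'" "nodes L = nodes B" "nodes L' = nodes B'"
    "fdim L = fdim L'" "stack B L = perm_act \<pi> (stack B' L')"
  shows "B = perm_act \<pi> B' \<and> L = perm_act \<pi> L'"
proof -
  have n: "nodes B = nodes B'" and f: "fdim B = fdim B'"
    and e0: "ent (stack B L) = ent (perm_act \<pi> (stack B' L'))"
    using assms(5,6) unfolding tensor_eq[of "stack B L"] by (simp_all only: perm_act_simps stack_simps) auto
  have e: "\<And>a b c. ent (stack B L) a b c = ent (perm_act \<pi> (stack B' L')) a b c"
    using e0 by simp
  have "ent B = (\<lambda>a b c. ent B' (inv \<pi> a) (inv \<pi> b) c)"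
  proof (intro ext)
    fix a b c
    show "ent B a b c = ent B' (inv \<pi> a) (inv \<pi> b) c"
    proof (cases "c < fdim B")
      case True then show ?thesis using e[of a b c] f by simp
    next
      case False then show ?thesis using assms(1,2) f unfolding wf_tensor_def by auto
    qed
  qed
  hence 1: "B = perm_act \<pi> B'" using n f by (simp add: tensor_eq)
  have "ent L = (\<lambda>a b c. ent L' (inv \<pi> a) (inv \<pi> b) c)"
  proof (intro ext)
    fix a b c
    show "ent L a b c = ent L' (inv \<pi> a) (inv \<pi> b) c"
      using e[of a b "c + fdim B"] f by simp
  qed
  hence "L = perm_act \<pi> L'" using n assms(3,4,5) by (simp add: tensor_eq)
  with 1 show ?thesis by simp
qed

lemma stack_perm:
  "perm_act \<pi> (stack B L) = stack (perm_act \<pi> B) (perm_act \<pi> L)"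
  unfolding tensor_eq by (simp add: fun_eq_iff)

lemma enc_props:
  assumes "graph A" "S \<subseteq> {..<nodes A}" "S \<noteq> {}" "enclosing_subgraph h S A = (T, B)"
  shows "graph B" "T \<subseteq> {..<nodes B}" "T \<noteq> {}" "finite T"
proof -
  define ns where "ns = sorted_list_of_set {i. i < nodes A \<and> (\<exists>j\<in>S. dist A i j \<le> enat h)}"
  have T: "T = {a. a < length ns \<and> ns ! a \<in> S}"
    and B: "B = (length ns, fdim A,
        \<lambda>a b c. if a < length ns \<and> b < length ns then ent A (ns ! a) (ns ! b) c else 0)"
    using assms(4) unfolding enclosing_subgraph_def ns_def Let_def by auto
  show "graph B" using assms(1) unfolding B graph_def wf_tensor_def
    by (auto simp: nodes_def fdim_def ent_def)
  show "T \<subseteq> {..<nodes B}" unfolding T B by (auto simp: nodes_def)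
  show "finite T" unfolding T by auto
  obtain j where j: "j \<in> S" using assms(3) by auto
  have "walk A 0 j j" by simp
  hence "dist A j j = 0" unfolding dist_def by (simp add: zero_enat_def exI[of _ 0])
  hence "dist A j j \<le> enat h" by simp
  hence "j \<in> set ns" unfolding ns_def using j assms(2) by auto
  then obtain a where "a < length ns" "ns ! a = j" by (auto simp: in_set_conv_nth)
  thus "T \<noteq> {}" unfolding T using j by auto
qed

theorem corollary1:
  fixes gnn :: "nat \<Rightarrow> tensor \<Rightarrow> 'r"
    and agg :: "'r multiset \<Rightarrow> 'o"
    and lab :: "nat set \<Rightarrow> tensor \<Rightarrow> tensor"
    and h :: nat
    and S S' :: "nat set" and A A' :: tensor
  assumes "node_most_expressive gnn"
    and "inj agg"
    and "labeling_trick lab"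
    and "graph A" and "graph A'"
    and "S \<subseteq> {..<nodes A}" and "S' \<subseteq> {..<nodes A'}"
    and "S \<noteq> {}" and "S' \<noteq> {}"
  shows "gnn_set gnn agg lab h S A = gnn_set gnn agg lab h S' A'
     \<longleftrightarrow> iso (enclosing_subgraph h S A) (enclosing_subgraph h S' A')"
proof -
  obtain T B where E: "enclosing_subgraph h S A = (T, B)" by (metis prod.exhaust)
  obtain T' B' where E': "enclosing_subgraph h S' A' = (T', B')" by (metis prod.exhaust)
  note P = enc_props[OF assms(4,6,8) E] and P' = enc_props[OF assms(5,7,9) E']
  note LT = assms(3)[unfolded labeling_trick_def]
  have L1: "\<forall>S A. graph A \<and> S \<subseteq> {..<nodes A} \<longrightarrow> wf_tensor (lab S A) \<and> nodes (lab S A) = nodes A"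
    using LT by (rule conjunct1)
  obtain d where L2: "\<forall>S A. graph A \<and> S \<subseteq> {..<nodes A} \<longrightarrow> fdim (lab S A) = d"
    using conjunct1[OF conjunct2[OF LT]] by (elim exE)
  have L3: "\<forall>S A S' A' \<pi>. graph A \<and> graph A' \<and> S \<subseteq> {..<nodes A} \<and> S' \<subseteq> {..<nodes A'} \<and>
        \<pi> permutes {..<nodes A'} \<longrightarrow>
        (lab S A = perm_act \<pi> (lab S' A') \<longrightarrow> S = \<pi> ` S') \<and>
        (S = \<pi> ` S' \<and> A = perm_act \<pi> A' \<longrightarrow> lab S A = perm_act \<pi> (lab S' A'))"
    using conjunct2[OF conjunct2[OF LT]] .
  have G: "\<forall>A A' i j. graph A \<and> graph A' \<and> i < nodes A \<and> j < nodes A' \<longrightarrow>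
        (gnn i A = gnn j A' \<longleftrightarrow> iso ({i}, A) ({j}, A'))"
    using assms(1) unfolding node_most_expressive_def .
  define X where "X = stack B (lab T B)"
  define X' where "X' = stack B' (lab T' B')"
  have wL: "wf_tensor (lab T B)" "nodes (lab T B) = nodes B" "fdim (lab T B) = d"
    using L1[rule_format, of B T] L2[rule_format, of B T] P(1,2) by simp_all
  have wL': "wf_tensor (lab T' B')" "nodes (lab T' B') = nodes B'" "fdim (lab T' B') = d"
    using L1[rule_format, of B' T'] L2[rule_format, of B' T'] P'(1,2) by simp_all
  have GX: "graph X" unfolding X_def using stack_graph P(1) wL by auto
  have GX': "graph X'" unfolding X'_def using stack_graph P'(1) wL' by auto
  have nX: "nodes X = nodes B" "nodes X' = nodes B'" unfolding X_def X'_def by auto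
  have gs: "gnn_set gnn agg lab h S A = agg (image_mset (\<lambda>i. gnn i X) (mset_set T))"
    "gnn_set gnn agg lab h S' A' = agg (image_mset (\<lambda>i. gnn i X') (mset_set T'))"
    unfolding gnn_set_def E E' X_def X'_def by simp_all
  show ?thesis
  proof
    assume "gnn_set gnn agg lab h S A = gnn_set gnn agg lab h S' A'"
    hence M: "image_mset (\<lambda>i. gnn i X) (mset_set T) = image_mset (\<lambda>i. gnn i X') (mset_set T')"
      using assms(2) gs by (simp add: inj_eq)
    obtain i where i: "i \<in> T" using P(3) by auto
    have "gnn i X \<in># image_mset (\<lambda>i. gnn i X') (mset_set T')"
      using M i P(4) by (metis finite_set_mset_mset_set image_eqI set_image_mset)
    then obtain j where j: "j \<in> T'" "gnn i X = gnn j X'" using P'(4) by auto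
    have ij: "i < nodes X" "j < nodes X'" using i j P(2) P'(2) nX by auto
    have "iso ({i}, X) ({j}, X')" using G[rule_format, of X X' i j] GX GX' ij j(2) by simp
    then obtain \<pi> where n: "nodes X = nodes X'" and pi: "\<pi> permutes {..<nodes X'}"
      and XX: "X = perm_act \<pi> X'" unfolding iso_def by auto
    have sp: "B = perm_act \<pi> B' \<and> lab T B = perm_act \<pi> (lab T' B')"
      using stack_perm_split[of B B' "lab T B" "lab T' B'" \<pi>] XX P(1) P'(1) wL wL'
      unfolding X_def X'_def graph_def by auto
    have pi': "\<pi> permutes {..<nodes B'}" using pi nX by simp
    have "T = \<pi> ` T'" using L3[rule_format, of B B' T T' \<pi>] P(1,2) P'(1,2) pi' sp by blast
    thus "iso (enclosing_subgraph h S A) (enclosing_subgraph h S' A')"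
      unfolding E E' iso_def using n nX pi' sp by auto
  next
    assume "iso (enclosing_subgraph h S A) (enclosing_subgraph h S' A')"
    then obtain \<pi> where n: "nodes B = nodes B'" and pi: "\<pi> permutes {..<nodes B'}"
      and TT: "T = \<pi> ` T'" and BB: "B = perm_act \<pi> B'" unfolding E E' iso_def by auto
    have "lab T B = perm_act \<pi> (lab T' B')" using L3[rule_format, of B B' T T' \<pi>] P(1,2) P'(1,2) pi TT BB by simp
    hence XX: "X = perm_act \<pi> X'" unfolding X_def X'_def using BB by (simp add: stack_perm)
    have eq: "gnn (\<pi> i) X = gnn i X'" if "i \<in> T'" for i
    proof -
      have "i < nodes B'" using that P'(2) by auto
      hence "\<pi> i < nodes B'" using pi permutes_in_image[OF pi, of i] by simp
      moreover have "iso ({\<pi> i}, X) ({i}, X')" unfolding iso_def prod.case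
        using XX pi nX n by (intro conjI exI[of _ \<pi>]) simp_all
      ultimately show ?thesis using G[rule_format, of X X' "\<pi> i" i] GX GX' nX n \<open>i < nodes B'\<close> by simp
    qed
    have inj: "inj_on \<pi> T'" by (rule inj_on_subset[OF permutes_inj[OF pi] subset_UNIV])
    have "mset_set T = image_mset \<pi> (mset_set T')"
      unfolding TT by (rule image_mset_mset_set[OF inj, symmetric])
    hence "image_mset (\<lambda>i. gnn i X) (mset_set T) = image_mset (\<lambda>i. gnn (\<pi> i) X) (mset_set T')"
      by (simp only: image_mset.compositionality comp_def)
    also have "\<dots> = image_mset (\<lambda>i. gnn i X') (mset_set T')"
      by (rule image_mset_cong) (use eq P'(4) in simp)
    finally have "image_mset (\<lambda>i. gnn i X) (mset_set T) = image_mset (\<lambda>i. gnn i X') (mset_set T')" .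
    thus "gnn_set gnn agg lab h S A = gnn_set gnn agg lab h S' A'" using gs by simp
  qed
qed

end
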